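(* Let $\mathcal{G}=(\mathcal{P},\mathcal{L})$ be a Fischer space with finitely many points, let $R$ be a commutative ring with $2=0$, let $A=M_R(\mathcal{G},1)$ and let $s=\sum_{p\in\mathcal{P}}p\in A$. Then $\operatorname{Ann}(A)=Rs$.
   Context: A 3-transposition group is a pair $(G,D)$ where $D$ is a single conjugacy class of involutions generating $G$ with $de$ of order at most $3$ for all $d,e\in D$. Its Fischer space $\mathcal{G}=(\mathcal{P},\mathcal{L})$ has $\mathcal{P}=D$ and as lines the $3$-subsets consisting of the three involutions of a subgroup isomorphic to $\mathrm{Sym}(3)$; since $D$ is one conjugacy class, $\mathcal{G}$ is connected. Distinct points on a common line are collinear ($p\sim q$), and $p\wedge q$ is the third point of that line. The nilpotent Matsuo algebra $A=M_R(\mathcal{G},1)$ is the free $R$-module with basis $\mathcal{P}$ and commutative bilinear product $p\cdot q=0$ if $p=q$ or $p\not\sim q$, $p\cdot q=p+q+p\wedge q$ if $p\sim q$. $\operatorname{Ann}(A)=\{v\in A: vw=0 \text{ for all } w\in A\}$. *)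

theory Defs
  imports "HOL-Algebra.Algebra"
begin

text \<open>3-transposition groups (G, D): D is a single conjugacy class of involutions
generating G, and de has order at most 3 for all d, e in D.  (group.ord gives 0 for
infinite order, so we require the order to lie in {1,2,3}.)\<close>
definition three_transposition_group :: "'a monoid \<Rightarrow> 'a set \<Rightarrow> bool" where
  "three_transposition_group G D \<longleftrightarrow>
     group G \<and> D \<subseteq> carrier G \<and>
     (\<exists>d\<in>D. D = {g \<otimes>\<^bsub>G\<^esub> d \<otimes>\<^bsub>G\<^esub> inv\<^bsub>G\<^esub> g | g. g \<in> carrier G}) \<and>
     (\<forall>d\<in>D. group.ord G d = 2) \<and>
     generate G D = carrier G \<and>
     (\<forall>d\<in>D. \<forall>e\<in>D. group.ord G (d \<otimes>\<^bsub>G\<^esub> e) \<in> {1, 2, 3})"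

definition fischer_lines :: "'a monoid \<Rightarrow> 'a set \<Rightarrow> 'a set set" where
  "fischer_lines G D =
     {T. T \<subseteq> D \<and> card T = 3 \<and>
         (\<exists>H. subgroup H G \<and> G\<lparr>carrier := H\<rparr> \<cong> sym_group 3 \<and>
              T = {h \<in> H. group.ord G h = 2})}"

definition collinear :: "'a monoid \<Rightarrow> 'a set \<Rightarrow> 'a \<Rightarrow> 'a \<Rightarrow> bool" where
  "collinear G D p q \<longleftrightarrow> p \<noteq> q \<and> (\<exists>l\<in>fischer_lines G D. p \<in> l \<and> q \<in> l)"

definition wedge :: "'a monoid \<Rightarrow> 'a set \<Rightarrow> 'a \<Rightarrow> 'a \<Rightarrow> 'a" where
  "wedge G D p q =
     (THE r. r \<noteq> p \<and> r \<noteq> q \<and> (\<exists>l\<in>fischer_lines G D. l = {p, q, r}))"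

text \<open>Elements of the free R-module with basis D: functions vanishing outside D.\<close>
definition matsuo_carrier :: "'a set \<Rightarrow> ('a \<Rightarrow> 'r::comm_ring_1) set" where
  "matsuo_carrier D = {v. \<forall>x. x \<notin> D \<longrightarrow> v x = 0}"

definition basis_prod :: "'a monoid \<Rightarrow> 'a set \<Rightarrow> 'a \<Rightarrow> 'a \<Rightarrow> 'a \<Rightarrow> 'r::comm_ring_1" where
  "basis_prod G D p q =
     (if collinear G D p q
      then (\<lambda>x. (if x = p then 1 else 0) + (if x = q then 1 else 0)
                 + (if x = wedge G D p q then 1 else 0))
      else (\<lambda>x. 0))"

definition matsuo_mult ::
  "'a monoid \<Rightarrow> 'a set \<Rightarrow> ('a \<Rightarrow> 'r::comm_ring_1) \<Rightarrow> ('a \<Rightarrow> 'r) \<Rightarrow> ('a \<Rightarrow> 'r)" where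
  "matsuo_mult G D v w = (\<lambda>x. \<Sum>p\<in>D. \<Sum>q\<in>D. v p * w q * basis_prod G D p q x)"

definition matsuo_ann :: "'a monoid \<Rightarrow> 'a set \<Rightarrow> ('a \<Rightarrow> 'r::comm_ring_1) set" where
  "matsuo_ann G D = {v \<in> matsuo_carrier D.
                       \<forall>w \<in> matsuo_carrier D. matsuo_mult G D v w = (\<lambda>_. 0)}"

definition point_sum :: "'a set \<Rightarrow> 'a \<Rightarrow> 'r::comm_ring_1" where
  "point_sum D = (\<lambda>x. if x \<in> D then 1 else 0)"

end

theory Submission
  imports Defs
begin
context group begin

lemma ord2_iff: "x \<in> carrier G \<Longrightarrow> ord x = 2 \<longleftrightarrow> x \<noteq> \<one> \<and> x \<otimes> x = \<one>"
proof -
  assume x: "x \<in> carrier G"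
  have sq: "x [^] (2::nat) = x \<otimes> x" using x by (simp add: numeral_2_eq_2)
  show ?thesis
  proof
    assume "ord x = 2"
    thus "x \<noteq> \<one> \<and> x \<otimes> x = \<one>" using x sq pow_ord_eq_1[OF x] ord_eq_1[OF x] by auto
  next
    assume h: "x \<noteq> \<one> \<and> x \<otimes> x = \<one>"
    hence "ord x dvd 2" using pow_eq_id[OF x, of 2] sq by simp
    moreover have "ord x \<noteq> 1" using h ord_eq_1[OF x] by simp
    moreover have "ord x \<le> 2" "ord x \<noteq> 0" using \<open>ord x dvd 2\<close> by (auto dest: dvd_imp_le intro: Nat.gr0I)
    ultimately show "ord x = 2" by linarith
  qed
qed

lemma ord3_D: "x \<in> carrier G \<Longrightarrow> ord x = 3 \<Longrightarrow> x \<noteq> \<one> \<and> x \<otimes> x \<noteq> \<one> \<and> x \<otimes> (x \<otimes> x) = \<one>"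
proof -
  assume x: "x \<in> carrier G" and o: "ord x = 3"
  have sq: "x [^] (2::nat) = x \<otimes> x" using x by (simp add: numeral_2_eq_2)
  have cu: "x [^] (3::nat) = x \<otimes> (x \<otimes> x)" using x by (simp add: numeral_3_eq_3 m_assoc nat_pow_Suc2)
  show ?thesis using pow_eq_id[OF x, of 2] pow_eq_id[OF x, of 3] sq cu o ord_eq_1[OF x] by auto
qed

end

context group begin
lemma neq_by: "u \<in> carrier G \<Longrightarrow> v \<in> carrier G \<Longrightarrow> inv u \<otimes> v \<noteq> \<one> \<Longrightarrow> u \<noteq> v"
  by auto

lemma s3_construct:
  assumes d: "d \<in> carrier G" and e: "e \<in> carrier G"
    and dd: "d \<otimes> d = \<one>" and ee: "e \<otimes> e = \<one>" and d1: "d \<noteq> \<one>" and e1: "e \<noteq> \<one>"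
    and o3: "ord (d \<otimes> e) = 3"
  shows "\<exists>H. subgroup H G \<and> G\<lparr>carrier := H\<rparr> \<cong> sym_group 3 \<and>
            {d, e, d \<otimes> e \<otimes> d} = {h \<in> H. ord h = 2}"
    and "d \<noteq> e" "d \<otimes> e \<otimes> d \<noteq> d" "d \<otimes> e \<otimes> d \<noteq> e"
proof -
  have de3: "d \<otimes> e \<noteq> \<one>" "d \<otimes> e \<otimes> (d \<otimes> e) \<noteq> \<one>" "d \<otimes> e \<otimes> (d \<otimes> e \<otimes> (d \<otimes> e)) = \<one>"
    using ord3_D[OF _ o3] d e by auto
  have dd': "d \<otimes> (d \<otimes> x) = x" if "x \<in> carrier G" for x
    using that d dd by (simp flip: m_assoc)
  have invd: "inv d = d" using dd d by (simp add: inv_char)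
  have inve: "inv e = e" using ee e by (simp add: inv_char)
  have ee': "e \<otimes> (e \<otimes> x) = x" if "x \<in> carrier G" for x
    using that e ee by (simp flip: m_assoc)
  have ede: "e \<otimes> (d \<otimes> e) = d \<otimes> (e \<otimes> d)"
  proof -
    have 1: "d \<otimes> (e \<otimes> d) \<otimes> (e \<otimes> (d \<otimes> e)) = d \<otimes> e \<otimes> (d \<otimes> e \<otimes> (d \<otimes> e))"
      using d e by (simp add: m_assoc)
    have 2: "d \<otimes> (e \<otimes> d) \<otimes> (d \<otimes> (e \<otimes> d)) = \<one>"
      using d e by (simp add: m_assoc dd' ee' dd)
    have "d \<otimes> (e \<otimes> d) \<otimes> (e \<otimes> (d \<otimes> e)) = d \<otimes> (e \<otimes> d) \<otimes> (d \<otimes> (e \<otimes> d))"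
      using 1 2 de3(3) by simp
    thus ?thesis using d e l_cancel by (meson m_closed)
  qed
  have ede': "e \<otimes> (d \<otimes> (e \<otimes> x)) = d \<otimes> (e \<otimes> (d \<otimes> x))" if "x \<in> carrier G" for x
  proof -
    have "e \<otimes> (d \<otimes> (e \<otimes> x)) = (e \<otimes> (d \<otimes> e)) \<otimes> x" using that d e by (simp add: m_assoc)
    also have "\<dots> = (d \<otimes> (e \<otimes> d)) \<otimes> x" by (simp only: ede)
    also have "\<dots> = d \<otimes> (e \<otimes> (d \<otimes> x))" using that d e by (simp add: m_assoc)
    finally show ?thesis .
  qed
  note R = m_assoc dd dd' ee ee' ede ede' invd inve inv_mult_group d e
  have b1: "e \<otimes> d \<noteq> \<one>"
  proof
    assume "e \<otimes> d = \<one>"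
    hence "inv (e \<otimes> d) = \<one>" by simp
    thus False using de3(1) by (simp add: R)
  qed
  have b2: "d \<otimes> (e \<otimes> d) \<noteq> \<one>"
  proof
    assume h: "d \<otimes> (e \<otimes> d) = \<one>"
    have "e = d \<otimes> (d \<otimes> (e \<otimes> d)) \<otimes> d" by (simp add: R)
    also have "\<dots> = \<one>" unfolding h using d dd by simp
    finally show False using e1 by simp
  qed
  note B = d1 e1 de3(1) b1 b2
  have n1: "\<one> \<noteq> d" "\<one> \<noteq> e" "\<one> \<noteq> d \<otimes> e" "\<one> \<noteq> e \<otimes> d" "\<one> \<noteq> d \<otimes> (e \<otimes> d)"
    "d \<noteq> e" "d \<noteq> d \<otimes> e" "d \<noteq> e \<otimes> d" "d \<noteq> d \<otimes> (e \<otimes> d)"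
    "e \<noteq> d \<otimes> e" "e \<noteq> e \<otimes> d" "e \<noteq> d \<otimes> (e \<otimes> d)"
    "d \<otimes> e \<noteq> e \<otimes> d" "d \<otimes> e \<noteq> d \<otimes> (e \<otimes> d)" "e \<otimes> d \<noteq> d \<otimes> (e \<otimes> d)"
    by (rule neq_by; simp add: R B)+
  note N = n1 n1[symmetric]
  define pd :: "nat \<Rightarrow> nat" where "pd = Transposition.transpose 1 2"
  define pe :: "nat \<Rightarrow> nat" where "pe = Transposition.transpose 2 3"
  have P: "pd \<circ> pd = id" "pd \<circ> (pd \<circ> x) = x" "pe \<circ> pe = id" "pe \<circ> (pe \<circ> x) = x"
     "pe \<circ> (pd \<circ> pe) = pd \<circ> (pe \<circ> pd)" "pe \<circ> (pd \<circ> (pe \<circ> x)) = pd \<circ> (pe \<circ> (pd \<circ> x))" for x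
    by (auto simp: fun_eq_iff pd_def pe_def transpose_def)
  define H where "H = {\<one>, d, e, d \<otimes> e, e \<otimes> d, d \<otimes> (e \<otimes> d)}"
  define f where "f x = (if x = \<one> then id else if x = d then pd else if x = e then pe
      else if x = d \<otimes> e then pd \<circ> pe else if x = e \<otimes> d then pe \<circ> pd else pd \<circ> (pe \<circ> pd))" for x
  have sub: "subgroup H G"
  proof
    show "H \<subseteq> carrier G" unfolding H_def using d e by auto
    show "\<one> \<in> H" unfolding H_def by simp
    show "x \<otimes> y \<in> H" if "x \<in> H" "y \<in> H" for x y
      using that unfolding H_def by (auto simp: R B N)
    show "inv x \<in> H" if "x \<in> H" for x
      using that unfolding H_def by (auto simp: R B N)
  qed
  have hom: "f (x \<otimes> y) = f x \<circ> f y" if "x \<in> H" "y \<in> H" for x y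
    using that unfolding H_def 
    by (simp only: insert_iff empty_iff) (elim disjE; simp add: f_def R B N P comp_assoc)
  define g where "g \<sigma> = (if \<sigma> 1 = 1 \<and> \<sigma> 2 = 2 then \<one> else if \<sigma> 1 = 2 \<and> \<sigma> 2 = 1 then d
     else if \<sigma> 1 = 1 then e else if \<sigma> 1 = 2 then d \<otimes> e else if \<sigma> 2 = (1::nat) then e \<otimes> d
     else d \<otimes> (e \<otimes> d))" for \<sigma> :: "nat \<Rightarrow> nat"
  have gf: "g (f x) = x" if "x \<in> H" for x
    using that unfolding H_def 
    by (simp only: insert_iff empty_iff) (elim disjE; simp add: f_def g_def N B pd_def pe_def transpose_def)
  have inj: "inj_on f H" by (rule inj_on_inverseI[of _ g]) (rule gf)
  have perm: "f x permutes {1..3}" if "x \<in> H" for x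
    using that unfolding H_def 
    by (simp only: insert_iff empty_iff) (elim disjE; simp add: f_def N B pd_def pe_def permutes_id permutes_swap_id permutes_compose)
  have cardH: "card H = 6" unfolding H_def using N by simp
  have cardC: "card {p. p permutes {1..3::nat}} = 6"
    using card_permutations[of "{1..3::nat}" 3] by (simp add: fact_numeral)
  have finC: "finite {p. p permutes {1..3::nat}}" by (rule finite_permutations) simp
  have img: "f ` H = {p. p permutes {1..3::nat}}"
    by (rule card_subset_eq[OF finC]) (use perm cardH cardC card_image[OF inj] in auto)
  have iso: "f \<in> iso (G\<lparr>carrier := H\<rparr>) (sym_group 3)"
    unfolding iso_def hom_def sym_group_def bij_betw_def
    using img inj hom perm by auto
  have O: "ord d = 2" "ord e = 2" "ord (d \<otimes> (e \<otimes> d)) = 2" "ord \<one> \<noteq> 2" "ord (d \<otimes> e) \<noteq> 2" "ord (e \<otimes> d) \<noteq> 2"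
    by (subst ord2_iff; simp add: R B N)+
  have "{d, e, d \<otimes> e \<otimes> d} = {h \<in> H. ord h = 2}"
    unfolding H_def using O d e by (auto simp: m_assoc)
  thus "\<exists>H. subgroup H G \<and> G\<lparr>carrier := H\<rparr> \<cong> sym_group 3 \<and>
            {d, e, d \<otimes> e \<otimes> d} = {h \<in> H. ord h = 2}"
    using sub iso unfolding is_iso_def by blast
  show "d \<noteq> e" "d \<otimes> e \<otimes> d \<noteq> d" "d \<otimes> e \<otimes> d \<noteq> e" using N d e by (simp_all add: m_assoc)
qed
end

context group begin

lemma card_S3: "card (carrier (sym_group 3)) = 6"
  using card_permutations[of "{1..3::nat}" 3] by (simp add: fact_numeral sym_group_def)

end

lemma line_struct:
  fixes G :: "'a monoid" (structure)
  assumes grp: "group G" and l: "l \<in> fischer_lines G D" and x: "x \<in> l" and y: "y \<in> l" and xy: "x \<noteq> y"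
  shows "x \<otimes> y \<otimes> x \<in> l" "x \<otimes> y \<otimes> x \<noteq> x" "x \<otimes> y \<otimes> x \<noteq> y" "l = {x, y, x \<otimes> y \<otimes> x}"
proof -
  interpret group G by (rule grp)
  obtain H where lD: "l \<subseteq> D" and c3: "card l = 3" and sub: "subgroup H G"
    and iso: "G\<lparr>carrier := H\<rparr> \<cong> sym_group 3" and lH: "l = {h \<in> H. ord h = 2}"
    using l unfolding fischer_lines_def by blast
  have xH: "x \<in> H" and yH: "y \<in> H" and ox: "ord x = 2" and oy: "ord y = 2" using x y unfolding lH by simp_all
  have xc: "x \<in> carrier G" and yc: "y \<in> carrier G" using subgroup.mem_carrier[OF sub xH] subgroup.mem_carrier[OF sub yH] by simp_all
  have x1: "x \<noteq> \<one>" and xx: "x \<otimes> x = \<one>" using ox ord2_iff[OF xc] by auto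
  have y1: "y \<noteq> \<one>" and yy: "y \<otimes> y = \<one>" using oy ord2_iff[OF yc] by auto
  have xx': "x \<otimes> (x \<otimes> w) = w" if "w \<in> carrier G" for w
    using that xc xx by (simp flip: m_assoc)
  have yy': "y \<otimes> (y \<otimes> w) = w" if "w \<in> carrier G" for w
    using that yc yy by (simp flip: m_assoc)
  note R = m_assoc xx xx' yy yy' xc yc
  define z where "z = x \<otimes> y \<otimes> x"
  have zc: "z \<in> carrier G" unfolding z_def using xc yc by simp
  have zH: "z \<in> H" unfolding z_def using xH yH sub by (simp add: subgroup.m_closed)
  have zz: "z \<otimes> z = \<one>" unfolding z_def by (simp add: R)
  have yz: "y = x \<otimes> z \<otimes> x" unfolding z_def by (simp add: R)
  have z1: "z \<noteq> \<one>"
  proof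
    assume "z = \<one>"
    hence "y = x \<otimes> x" using yz xc by simp
    thus False using xx y1 by simp
  qed
  have "ord z = 2" using ord2_iff[OF zc] z1 zz by simp
  hence zl: "z \<in> l" using lH zH by simp
  have zx: "z \<noteq> x"
  proof
    assume "z = x"
    hence "y = x \<otimes> x \<otimes> x" using yz by simp
    thus False using xx xy xc by simp
  qed
  have zy: "z \<noteq> y"
  proof
    assume zy: "z = y"
    have com: "y \<otimes> x = x \<otimes> y"
    proof -
      have "y \<otimes> x = z \<otimes> x" using zy by simp
      also have "\<dots> = x \<otimes> y" unfolding z_def by (simp add: R)
      finally show ?thesis .
    qed
    have com': "y \<otimes> (x \<otimes> w) = x \<otimes> (y \<otimes> w)" if "w \<in> carrier G" for w
      using that xc yc com by (simp flip: m_assoc)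
    define K where "K = {\<one>, x, y, x \<otimes> y}"
    have xy1: "x \<otimes> y \<noteq> \<one>"
    proof
      assume "x \<otimes> y = \<one>"
      hence "x \<otimes> (x \<otimes> y) = x" using xc by simp
      thus False using xy by (simp add: R)
    qed
    have xy2: "x \<otimes> y \<noteq> x"
    proof
      assume "x \<otimes> y = x"
      hence "x \<otimes> (x \<otimes> y) = x \<otimes> x" by simp
      thus False using y1 by (simp add: R)
    qed
    have xy3: "x \<otimes> y \<noteq> y"
    proof
      assume "x \<otimes> y = y"
      hence "x \<otimes> y \<otimes> y = y \<otimes> y" by simp
      thus False using x1 by (simp add: R)
    qed
    have subK: "subgroup K G"
    proof
      show "K \<subseteq> carrier G" unfolding K_def using xc yc by auto
      show "\<one> \<in> K" unfolding K_def by simp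
      show "a \<otimes> b \<in> K" if "a \<in> K" "b \<in> K" for a b
        using that unfolding K_def
        by (simp only: insert_iff empty_iff) (elim disjE; simp add: R com com')
      show "inv a \<in> K" if "a \<in> K" for a
      proof -
        have ix: "inv x = x" using xx xc by (simp add: inv_char)
        have iy: "inv y = y" using yy yc by (simp add: inv_char)
        show ?thesis using that unfolding K_def
          by (simp only: insert_iff empty_iff) (elim disjE; simp add: R com ix iy inv_mult_group)
      qed
    qed
    have KH: "K \<subseteq> H" unfolding K_def using xH yH sub by (auto intro: subgroup.m_closed subgroup.one_closed)
    have subK': "subgroup K (G\<lparr>carrier := H\<rparr>)" using subgroup_incl[OF subK sub KH] .
    have gH: "group (G\<lparr>carrier := H\<rparr>)" using subgroup.subgroup_is_group[OF sub is_group] .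
    obtain h where "h \<in> iso (G\<lparr>carrier := H\<rparr>) (sym_group 3)" using iso unfolding is_iso_def by blast
    hence "bij_betw h H (carrier (sym_group 3))" unfolding iso_def by simp
    hence cH: "card H = 6" using card_S3 bij_betw_same_card by fastforce
    have cK: "card K = 4" unfolding K_def using x1 y1 xy xy1 xy2 xy3 by (simp add: eq_commute)
    have "card (rcosets\<^bsub>G\<lparr>carrier := H\<rparr>\<^esub> K) * card K = order (G\<lparr>carrier := H\<rparr>)"
      using group.lagrange[OF gH subK'] .
    hence "card (rcosets\<^bsub>G\<lparr>carrier := H\<rparr>\<^esub> K) * 4 = 6" using cK cH by (simp add: order_def)
    thus False by presburger
  qed
  show "x \<otimes> y \<otimes> x \<in> l" "x \<otimes> y \<otimes> x \<noteq> x" "x \<otimes> y \<otimes> x \<noteq> y" using zl zx zy z_def by auto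
  have fin: "finite l" using c3 by (intro card_ge_0_finite) simp
  have "{x, y, z} \<subseteq> l" using x y zl by auto
  moreover have "card {x, y, z} = 3" using xy zx zy by (simp add: eq_commute)
  ultimately show "l = {x, y, x \<otimes> y \<otimes> x}" using card_subset_eq[OF fin] c3 z_def by metis
qed

lemma lines_sub:
  "l \<in> fischer_lines G D \<Longrightarrow> l \<subseteq> D"
  unfolding fischer_lines_def by (drule CollectD) (erule conjunct1)

lemma line_unique:
  fixes G :: "'a monoid" (structure)
  assumes grp: "group G" and l: "l \<in> fischer_lines G D" and l': "l' \<in> fischer_lines G D"
    and "x \<in> l" "y \<in> l" "x \<in> l'" "y \<in> l'" "x \<noteq> y"
  shows "l = l'"
proof -
  have A: "l = {x, y, x \<otimes> y \<otimes> x}" using line_struct(4)[OF grp l, of x y] assms by blast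
  have B: "l' = {x, y, x \<otimes> y \<otimes> x}" using line_struct(4)[OF grp l', of x y] assms by blast
  show ?thesis using A B by (rule trans[OF _ sym])
qed

lemma wedge_eq:
  fixes G :: "'a monoid" (structure)
  assumes grp: "group G" and l: "l \<in> fischer_lines G D" and p: "p \<in> l" and q: "q \<in> l" and pq: "p \<noteq> q"
  shows "wedge G D p q = p \<otimes> q \<otimes> p"
  unfolding wedge_def
proof (rule the_equality)
  show "p \<otimes> q \<otimes> p \<noteq> p \<and> p \<otimes> q \<otimes> p \<noteq> q \<and> (\<exists>l\<in>fischer_lines G D. l = {p, q, p \<otimes> q \<otimes> p})"
    using line_struct[OF grp l p q pq] l by (intro conjI bexI[of _ l]) simp_all
  fix r assume r: "r \<noteq> p \<and> r \<noteq> q \<and> (\<exists>l\<in>fischer_lines G D. l = {p, q, r})"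
  then obtain l' where l': "l' \<in> fischer_lines G D" "l' = {p, q, r}" by blast
  have "p \<in> l'" "q \<in> l'" using l'(2) by simp_all
  hence "l' = {p, q, p \<otimes> q \<otimes> p}" using line_struct(4)[OF grp l'(1), of p q] pq by blast
  hence "r \<in> {p, q, p \<otimes> q \<otimes> p}" using l'(2) by (metis insertCI)
  thus "r = p \<otimes> q \<otimes> p" using r by simp
qed

lemma wedge_line:
  fixes G :: "'a monoid" (structure)
  assumes grp: "group G" and l: "l \<in> fischer_lines G D" and p: "p \<in> l" and q: "q \<in> l" and pq: "p \<noteq> q"
  shows "wedge G D p q \<in> l" "wedge G D p q \<noteq> p" "wedge G D p q \<noteq> q" "l = {p, q, wedge G D p q}"
  using line_struct[OF grp l p q pq] wedge_eq[OF grp l p q pq] by simp_all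

lemma collinear_sym: "collinear G D p q \<Longrightarrow> collinear G D q p"
  unfolding collinear_def by blast

lemma collinear_D: "collinear G D p q \<Longrightarrow> p \<in> D \<and> q \<in> D"
  unfolding collinear_def using lines_sub by blast

lemma conj_D:
  fixes G :: "'a monoid" (structure)
  assumes T: "three_transposition_group G D" and x: "x \<in> carrier G" and c: "c \<in> D"
  shows "x \<otimes> c \<otimes> inv x \<in> D"
proof -
  have grp: "group G" using T unfolding three_transposition_group_def by blast
  interpret group G by (rule grp)
  obtain d where d: "d \<in> D" and Dd: "D = {g \<otimes> d \<otimes> inv g | g. g \<in> carrier G}"
    using T unfolding three_transposition_group_def by blast
  have DG: "D \<subseteq> carrier G" using T unfolding three_transposition_group_def by blast
  have "c \<in> {g \<otimes> d \<otimes> inv g | g. g \<in> carrier G}" using c by (subst (asm) Dd)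
  then obtain g where g: "g \<in> carrier G" and cg: "c = g \<otimes> d \<otimes> inv g" by auto
  have dc: "d \<in> carrier G" using d DG by blast
  have "x \<otimes> c \<otimes> inv x = (x \<otimes> g) \<otimes> d \<otimes> inv (x \<otimes> g)"
    using x g dc cg by (simp add: m_assoc inv_mult_group)
  moreover have "x \<otimes> g \<in> carrier G" using x g by simp
  ultimately show ?thesis by (subst Dd) auto
qed

lemma sym3_collinear:
  fixes G :: "'a monoid" (structure)
  assumes T: "three_transposition_group G D" and x: "x \<in> D" and c: "c \<in> D"
    and o3: "group.ord G (x \<otimes> c) = 3"
  shows "collinear G D c (x \<otimes> c \<otimes> x)"
proof -
  have grp: "group G" using T unfolding three_transposition_group_def by blast
  interpret group G by (rule grp)
  have DG: "D \<subseteq> carrier G" and o2: "\<forall>d\<in>D. ord d = 2" using T unfolding three_transposition_group_def by blast+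
  have xc: "x \<in> carrier G" and cc: "c \<in> carrier G" using x c DG by blast+
  have x1: "x \<noteq> \<one>" and xx: "x \<otimes> x = \<one>" using o2 x ord2_iff[OF xc] by auto
  have c1: "c \<noteq> \<one>" and cc2: "c \<otimes> c = \<one>" using o2 c ord2_iff[OF cc] by auto
  note S = s3_construct[OF xc cc xx cc2 x1 c1 o3]
  obtain H where H: "subgroup H G" "G\<lparr>carrier := H\<rparr> \<cong> sym_group 3"
      "{x, c, x \<otimes> c \<otimes> x} = {h \<in> H. ord h = 2}" using S(1) by blast
  have ix: "inv x = x" using xx xc by (simp add: inv_char)
  have "x \<otimes> c \<otimes> x \<in> D" using conj_D[OF T xc c] ix by simp
  hence sub: "{x, c, x \<otimes> c \<otimes> x} \<subseteq> D" using x c by blast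
  have card: "card {x, c, x \<otimes> c \<otimes> x} = 3" using S(2-4) by auto
  have "{x, c, x \<otimes> c \<otimes> x} \<in> fischer_lines G D"
    unfolding fischer_lines_def mem_Collect_eq using sub card H by (intro conjI exI[of _ H]) simp_all
  thus ?thesis unfolding collinear_def using S(4) by (intro conjI bexI[of _ "{x, c, x \<otimes> c \<otimes> x}"]) auto
qed

lemma connected:
  fixes G :: "'a monoid" (structure)
  assumes T: "three_transposition_group G D"
  shows "\<exists>d0\<in>D. \<forall>x\<in>D. (d0, x) \<in> {(a, b). collinear G D a b}\<^sup>*"
proof -
  have grp: "group G" using T unfolding three_transposition_group_def by blast
  interpret group G by (rule grp)
  have DG: "D \<subseteq> carrier G" and o2: "\<forall>d\<in>D. ord d = 2" and gen: "generate G D = carrier G"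
    and o123: "\<forall>d\<in>D. \<forall>e\<in>D. ord (d \<otimes> e) \<in> {1, 2, 3}"
    using T unfolding three_transposition_group_def by blast+
  obtain d0 where d0: "d0 \<in> D" and Dd: "D = {g \<otimes> d0 \<otimes> inv g | g. g \<in> carrier G}"
    using T unfolding three_transposition_group_def by blast
  define Rel where "Rel = {(a, b). collinear G D a b}"
  define C where "C = {x. (d0, x) \<in> Rel\<^sup>*}"
  have CD: "c \<in> D" if "c \<in> C" for c
  proof -
    have "(d0, c) \<in> Rel\<^sup>*" using that unfolding C_def by simp
    thus ?thesis
    proof (induct rule: rtrancl_induct)
      case base show ?case using d0 .
    next
      case (step y z)
      hence "collinear G D y z" unfolding Rel_def by simp
      thus ?case using collinear_D[of G D y z] by simp
    qed
  qed
  have invD: "inv h = h" "h \<otimes> h = \<one>" "h \<in> carrier G" if "h \<in> D" for h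
  proof -
    have hc: "h \<in> carrier G" using DG that by (rule subsetD)
    have "ord h = 2" using o2 that by simp
    hence "h \<otimes> h = \<one>" using ord2_iff[OF hc] by simp
    thus "inv h = h" "h \<otimes> h = \<one>" "h \<in> carrier G" using hc by (simp_all add: inv_char)
  qed
  have step: "h \<otimes> c \<otimes> h \<in> C" if h: "h \<in> D" and c: "c \<in> C" for h c
  proof -
    have cD: "c \<in> D" using CD[OF c] .
    note hh = invD[OF h] and cc = invD[OF cD]
    have hcc: "h \<otimes> c \<in> carrier G" using hh cc by simp
    have "ord (h \<otimes> c) \<in> {1, 2, 3}" using o123 h cD by blast
    then consider "ord (h \<otimes> c) = 1" | "ord (h \<otimes> c) = 2" | "ord (h \<otimes> c) = 3" by blast
    thus ?thesis
    proof cases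
      case 1
      hence "h \<otimes> c = \<one>" using ord_eq_1[OF hcc] by simp
      hence "h \<otimes> c = h \<otimes> h" using hh by simp
      hence "c = h" using hh cc l_cancel by blast
      hence "h \<otimes> c \<otimes> h = c" using hh by simp
      thus ?thesis using c by simp
    next
      case 2
      hence e: "h \<otimes> c \<otimes> (h \<otimes> c) = \<one>" using ord2_iff[OF hcc] by simp
      have "h \<otimes> c \<otimes> h = h \<otimes> c \<otimes> h \<otimes> (c \<otimes> c)" using hh cc by simp
      also have "\<dots> = (h \<otimes> c \<otimes> (h \<otimes> c)) \<otimes> c" using hh cc by (simp add: m_assoc)
      also have "\<dots> = c" using e cc by simp
      finally show ?thesis using c by simp
    next
      case 3
      have "collinear G D c (h \<otimes> c \<otimes> h)" using sym3_collinear[OF T h cD 3] .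
      hence "(c, h \<otimes> c \<otimes> h) \<in> Rel" unfolding Rel_def by simp
      thus ?thesis using c unfolding C_def by (simp add: rtrancl_into_rtrancl)
    qed
  qed
  have conjC: "\<forall>c\<in>C. g \<otimes> c \<otimes> inv g \<in> C" if "g \<in> generate G D" for g
    using that
  proof (induct rule: generate.induct)
    case one
    show ?case
    proof
      fix c assume c: "c \<in> C"
      have "c \<in> carrier G" using DG CD[OF c] by (rule subsetD)
      thus "\<one> \<otimes> c \<otimes> inv \<one> \<in> C" using c by simp
    qed
  next
    case (incl h)
    thus ?case using step invD by simp
  next
    case (inv h)
    thus ?case using step invD by simp
  next
    case (eng g1 g2)
    have g1: "g1 \<in> carrier G" and g2: "g2 \<in> carrier G"
      using eng(1,3) generate_in_carrier[OF DG] by blast+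
    show ?case
    proof
      fix c assume c: "c \<in> C"
      have cc: "c \<in> carrier G" using CD[OF c] DG by blast
      have "g2 \<otimes> c \<otimes> inv g2 \<in> C" using eng(4) c by blast
      hence "g1 \<otimes> (g2 \<otimes> c \<otimes> inv g2) \<otimes> inv g1 \<in> C" using eng(2) by blast
      moreover have "g1 \<otimes> (g2 \<otimes> c \<otimes> inv g2) \<otimes> inv g1 = g1 \<otimes> g2 \<otimes> c \<otimes> inv (g1 \<otimes> g2)"
        using g1 g2 cc by (simp add: m_assoc inv_mult_group)
      ultimately show "g1 \<otimes> g2 \<otimes> c \<otimes> inv (g1 \<otimes> g2) \<in> C" by simp
    qed
  qed
  have d0C: "d0 \<in> C" unfolding C_def by simp
  have "\<forall>x\<in>D. x \<in> C"
  proof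
    fix x assume "x \<in> D"
    hence "x \<in> {g \<otimes> d0 \<otimes> inv g | g. g \<in> carrier G}" by (subst (asm) Dd)
    then obtain g where g: "g \<in> carrier G" and xg: "x = g \<otimes> d0 \<otimes> inv g" by auto
    show "x \<in> C" using conjC[of g] g gen d0C xg by simp
  qed
  thus ?thesis using d0 unfolding C_def Rel_def by blast
qed

lemma two_zero_add: "(2::'r::comm_ring_1) = 0 \<Longrightarrow> (a::'r) + a = 0"
  by (metis mult_2 mult_zero_left)

lemma invol_sum_zero:
  fixes f :: "'b \<Rightarrow> 'r::comm_ring_1"
  assumes "finite S" and "\<forall>p\<in>S. \<sigma> p \<in> S \<and> \<sigma> p \<noteq> p \<and> \<sigma> (\<sigma> p) = p \<and> f (\<sigma> p) = f p"
    and two: "(2::'r) = 0"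
  shows "sum f S = 0"
  using assms(1,2)
proof (induct "card S" arbitrary: S rule: less_induct)
  case less
  show ?case
  proof (cases "S = {}")
    case True thus ?thesis by simp
  next
    case False
    then obtain p where p: "p \<in> S" by blast
    have sp: "\<sigma> p \<in> S" "\<sigma> p \<noteq> p" "f (\<sigma> p) = f p" using less(3) p by auto
    define S' where "S' = S - {p, \<sigma> p}"
    have sub: "{p, \<sigma> p} \<subseteq> S" using p sp by blast
    have fin': "finite S'" using less(2) unfolding S'_def by simp
    have lt: "card S' < card S"
      by (rule psubset_card_mono[OF less(2)]) (use p in \<open>auto simp: S'_def\<close>)
    have cl: "\<forall>a\<in>S'. \<sigma> a \<in> S' \<and> \<sigma> a \<noteq> a \<and> \<sigma> (\<sigma> a) = a \<and> f (\<sigma> a) = f a"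
    proof
      fix a assume a: "a \<in> S'"
      have aS: "a \<in> S" "a \<noteq> p" "a \<noteq> \<sigma> p" using a unfolding S'_def by auto
      have h: "\<sigma> a \<in> S" "\<sigma> a \<noteq> a" "\<sigma> (\<sigma> a) = a" "f (\<sigma> a) = f a" using less(3) aS(1) by auto
      have "\<sigma> a \<noteq> p" using h(3) aS(3) by metis
      moreover have "\<sigma> a \<noteq> \<sigma> p" using h(3) aS(2) less(3) p by metis
      ultimately show "\<sigma> a \<in> S' \<and> \<sigma> a \<noteq> a \<and> \<sigma> (\<sigma> a) = a \<and> f (\<sigma> a) = f a"
        using h unfolding S'_def by auto
    qed
    have IH: "sum f S' = 0" using less(1)[OF lt fin' cl] .
    have "sum f S = sum f S' + sum f {p, \<sigma> p}"
      unfolding S'_def using sum.subset_diff[OF sub less(2)] .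
    also have "sum f {p, \<sigma> p} = f p + f p" using sp by simp
    also have "f p + f p = 0" using two_zero_add[OF two] .
    finally show ?thesis using IH by simp
  qed
qed

lemma col_sum:
  fixes G :: "'a monoid" (structure)
  assumes grp: "group G" and fin: "finite D" and two: "(2::'r::comm_ring_1) = 0"
  shows "(\<Sum>p\<in>D. (basis_prod G D p q x :: 'r)) = 0"
proof -
  define S where "S = {p \<in> D. collinear G D p q}"
  define f :: "'a \<Rightarrow> 'r" where "f p = (if x = p then 1 else 0) + (if x = q then 1 else 0)
                 + (if x = wedge G D p q then 1 else 0)" for p
  have "(\<Sum>p\<in>D. (basis_prod G D p q x :: 'r)) = (\<Sum>p\<in>D. if collinear G D p q then f p else 0)"
    unfolding basis_prod_def f_def by (intro sum.cong) auto
  also have "\<dots> = sum f S" unfolding S_def using sum.inter_filter[OF fin] by metis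
  also have "sum f S = 0"
  proof (rule invol_sum_zero[where \<sigma> = "\<lambda>p. wedge G D p q"])
    show "finite S" unfolding S_def using fin by simp
    show "(2::'r) = 0" by (rule two)
    show "\<forall>p\<in>S. wedge G D p q \<in> S \<and> wedge G D p q \<noteq> p \<and> wedge G D (wedge G D p q) q = p \<and>
             f (wedge G D p q) = f p"
    proof
      fix p assume "p \<in> S"
      hence c: "collinear G D p q" unfolding S_def by simp
      then obtain l where l: "l \<in> fischer_lines G D" "p \<in> l" "q \<in> l" "p \<noteq> q"
        unfolding collinear_def by blast
      define r where "r = wedge G D p q"
      have r: "r \<in> l" "r \<noteq> p" "r \<noteq> q" "l = {p, q, r}" using wedge_line[OF grp l] unfolding r_def by auto
      have rD: "r \<in> D" using lines_sub[OF l(1)] r(1) by (rule subsetD)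
      have crq: "collinear G D r q" unfolding collinear_def using l(1) l(3) r(1) r(3) by blast
      have w2: "wedge G D r q \<in> l" "wedge G D r q \<noteq> r" "wedge G D r q \<noteq> q"
        using wedge_line[OF grp l(1) r(1) l(3) r(3)] by auto
      have "wedge G D r q \<in> {p, q, r}" using w2(1) r(4) by simp
      hence rr: "wedge G D r q = p" using w2(2,3) by simp
      have "f r = f p" unfolding f_def r_def[symmetric] rr by (simp add: ac_simps)
      thus "wedge G D p q \<in> S \<and> wedge G D p q \<noteq> p \<and> wedge G D (wedge G D p q) q = p \<and>
             f (wedge G D p q) = f p"
        unfolding r_def[symmetric] S_def using rD crq r(2) rr by simp
    qed
  qed
  finally show ?thesis .
qed

lemma ann_coll:
  fixes G :: "'a monoid" (structure)
  assumes grp: "group G" and fin: "finite D" and two: "(2::'r::comm_ring_1) = 0"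
    and v: "(v :: 'a \<Rightarrow> 'r) \<in> matsuo_ann G D" and c: "collinear G D p q"
  shows "v p = v q"
proof -
  obtain l where l: "l \<in> fischer_lines G D" "p \<in> l" "q \<in> l" "p \<noteq> q"
    using c unfolding collinear_def by blast
  define r where "r = wedge G D p q"
  have r: "r \<in> l" "r \<noteq> p" "r \<noteq> q" "l = {p, q, r}" using wedge_line[OF grp l] unfolding r_def by auto
  have rD: "r \<in> D" using lines_sub[OF l(1)] r(1) by (rule subsetD)
  have lD: "l \<subseteq> D" using lines_sub[OF l(1)] .
  define w :: "'a \<Rightarrow> 'r" where "w x = (if x = r then 1 else 0)" for x
  have wc: "w \<in> matsuo_carrier D" unfolding matsuo_carrier_def w_def using rD by auto
  have "matsuo_mult G D v w = (\<lambda>_. 0)" using v wc unfolding matsuo_ann_def by blast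
  hence "matsuo_mult G D v w p = 0" by simp
  hence e0: "(\<Sum>a\<in>D. \<Sum>b\<in>D. v a * w b * basis_prod G D a b p) = 0" unfolding matsuo_mult_def by simp
  have inner: "(\<Sum>b\<in>D. v a * w b * basis_prod G D a b p) = v a * basis_prod G D a r p" for a
  proof -
    have "(\<Sum>b\<in>D. v a * w b * basis_prod G D a b p) = (\<Sum>b\<in>D. if b = r then v a * basis_prod G D a r p else 0)"
      unfolding w_def by (intro sum.cong) auto
    also have "\<dots> = v a * basis_prod G D a r p" using fin rD by simp
    finally show ?thesis .
  qed
  have zero: "v a * basis_prod G D a r p = 0" if a: "a \<in> D - {p, q}" for a
  proof (cases "collinear G D a r")
    case False thus ?thesis unfolding basis_prod_def by simp
  next
    case True
    then obtain l' where l': "l' \<in> fischer_lines G D" "a \<in> l'" "r \<in> l'" "a \<noteq> r"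
      unfolding collinear_def by blast
    have w': "l' = {a, r, wedge G D a r}" using wedge_line(4)[OF grp l'] .
    have "wedge G D a r \<noteq> p"
    proof
      assume wp: "wedge G D a r = p"
      hence "p \<in> l'" using w' by simp
      hence "l = l'" using line_unique[OF grp l(1) l'(1), of p r] l(2) r(1,2) l'(3) by simp
      hence "a \<in> {p, q, r}" using l'(2) r(4) by simp
      thus False using a l'(4) by simp
    qed
    moreover have "p \<noteq> a" "p \<noteq> r" using a r(2) by auto
    ultimately show ?thesis unfolding basis_prod_def using True by simp
  qed
  have cpr: "collinear G D p r" unfolding collinear_def using l(1) l(2) r(1) r(2) by blast
  have cqr: "collinear G D q r" unfolding collinear_def using l(1) l(3) r(1) r(3) by blast
  have wpr: "wedge G D p r = q"
  proof -
    have "wedge G D p r \<in> l" "wedge G D p r \<noteq> p" "wedge G D p r \<noteq> r"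
      using wedge_line[OF grp l(1) l(2) r(1)] r(2) by auto
    thus ?thesis using r(4) by simp
  qed
  have wqr: "wedge G D q r = p"
  proof -
    have "wedge G D q r \<in> l" "wedge G D q r \<noteq> q" "wedge G D q r \<noteq> r"
      using wedge_line[OF grp l(1) l(3) r(1)] r(3) by auto
    thus ?thesis using r(4) by simp
  qed
  have bp: "basis_prod G D p r p = (1::'r)" unfolding basis_prod_def using cpr wpr l(4) r(2) by simp
  have bq: "basis_prod G D q r p = (1::'r)" unfolding basis_prod_def using cqr wqr l(4) r(2) by simp
  have "(\<Sum>a\<in>D. v a * basis_prod G D a r p) = (\<Sum>a\<in>{p, q}. v a * basis_prod G D a r p)"
    using lD l(2,3) zero fin by (intro sum.mono_neutral_right) auto
  also have "\<dots> = v p + v q" using l(4) bp bq by simp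
  finally have "v p + v q = 0" using e0 inner by simp
  hence "v p = - v q" by (simp add: eq_neg_iff_add_eq_0)
  also have "- v q = v q" using two_zero_add[OF two, of "v q"] by (simp add: minus_unique)
  finally show ?thesis .
qed

theorem lemma5p8:
  fixes G :: "'a monoid" and D :: "'a set"
  assumes "three_transposition_group G D"
    and "finite D"
    and "(2::'r::comm_ring_1) = 0"
  shows "(matsuo_ann G D :: ('a \<Rightarrow> 'r) set) = {(\<lambda>x. c * point_sum D x) | c. True}"
proof (intro equalityI subsetI)
  have grp: "group G" using assms(1) unfolding three_transposition_group_def by blast
  fix v :: "'a \<Rightarrow> 'r" assume v: "v \<in> matsuo_ann G D"
  obtain d0 where d0: "d0 \<in> D" and conn: "\<forall>x\<in>D. (d0, x) \<in> {(a, b). collinear G D a b}\<^sup>*"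
    using connected[OF assms(1)] by blast
  have const: "v x = v d0" if "x \<in> D" for x
  proof -
    have "(d0, x) \<in> {(a, b). collinear G D a b}\<^sup>*" using conn that by blast
    thus ?thesis
    proof (induct rule: rtrancl_induct)
      case base show ?case by simp
    next
      case (step y z)
      hence "collinear G D y z" by simp
      hence "v y = v z" using ann_coll[OF grp assms(2,3) v] by blast
      thus ?case using step(3) by simp
    qed
  qed
  have vc: "v \<in> matsuo_carrier D" using v unfolding matsuo_ann_def by blast
  have "v = (\<lambda>x. v d0 * point_sum D x)"
  proof
    fix x show "v x = v d0 * point_sum D x"
    proof (cases "x \<in> D")
      case True thus ?thesis using const unfolding point_sum_def by simp
    next
      case False thus ?thesis using vc unfolding point_sum_def matsuo_carrier_def by simp
    qed
  qed
  thus "v \<in> {(\<lambda>x. c * point_sum D x) | c. True}" by blast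
next
  have grp: "group G" using assms(1) unfolding three_transposition_group_def by blast
  fix v :: "'a \<Rightarrow> 'r" assume "v \<in> {(\<lambda>x. c * point_sum D x) | c. True}"
  then obtain c where vdef: "v = (\<lambda>x. c * point_sum D x)" by blast
  have vc: "v \<in> matsuo_carrier D" unfolding vdef matsuo_carrier_def point_sum_def by simp
  have "matsuo_mult G D v w = (\<lambda>_. 0)" if w: "w \<in> matsuo_carrier D" for w
  proof
    fix x
    have "matsuo_mult G D v w x = (\<Sum>p\<in>D. \<Sum>q\<in>D. c * w q * basis_prod G D p q x)"
      unfolding matsuo_mult_def vdef point_sum_def by (intro sum.cong) auto
    also have "\<dots> = (\<Sum>q\<in>D. \<Sum>p\<in>D. c * w q * basis_prod G D p q x)" by (rule sum.swap)
    also have "\<dots> = (\<Sum>q\<in>D. c * w q * (\<Sum>p\<in>D. basis_prod G D p q x))"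
      by (simp add: sum_distrib_left)
    also have "\<dots> = 0" using col_sum[OF grp assms(2,3)] by simp
    finally show "matsuo_mult G D v w x = 0" .
  qed
  thus "v \<in> matsuo_ann G D" unfolding matsuo_ann_def using vc by blast
qed

end
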